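(* Let $n\in\mathbb{N}$ and let $f$ be an extremal function in the Krzyz problem for index $n$ satisfying $\{f\}_n=2\{f\}_0>0$. Then \[ f(z)=\exp\left(-\frac{1-z^n}{1+z^n}\right),\qquad z\in\Delta, \] i.e. such an $f$ is unique.
   Context: $\Delta=\{z\in\mathbb{C}:|z|<1\}$. For $f$ holomorphic in $\Delta$, $\{f\}_j$ denotes its $j$-th Taylor coefficient at $0$. The class $B$ consists of functions $f$ holomorphic in $\Delta$ with $0<|f(z)|\leqslant1$ for all $z\in\Delta$. For fixed $n\in\mathbb{N}$, $f\in B$ is called extremal in the Krzyz problem for index $n$ if $|\{f\}_n|=\max_{g\in B}|\{g\}_n|$; extremal functions are taken normalized so that $\{f\}_0>0$ and $\{f\}_n>0$. *)

theory Defs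
  imports "HOL-Complex_Analysis.Complex_Analysis"
begin

abbreviation unit_disc :: "complex set" where
  "unit_disc \<equiv> ball 0 1"

definition taylor_coeff :: "(complex \<Rightarrow> complex) \<Rightarrow> nat \<Rightarrow> complex" where
  "taylor_coeff f j = (deriv ^^ j) f 0 / of_nat (fact j)"

definition krzyz_class :: "(complex \<Rightarrow> complex) set" where
  "krzyz_class = {f. f holomorphic_on unit_disc \<and>
      (\<forall>z\<in>unit_disc. 0 < norm (f z) \<and> norm (f z) \<le> 1)}"

definition krzyz_extremal :: "nat \<Rightarrow> (complex \<Rightarrow> complex) \<Rightarrow> bool" where
  "krzyz_extremal n f \<longleftrightarrow> f \<in> krzyz_class \<and>
      (\<forall>g\<in>krzyz_class. norm (taylor_coeff g n) \<le> norm (taylor_coeff f n))"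

end

theory Submission
  imports Defs
begin

definition Ecis :: "real \<Rightarrow> complex" where "Ecis x = exp (\<i> * complex_of_real x)"

lemma Ex_add: "Ecis (a + b) = Ecis a * Ecis b"
  by (simp add: Ecis_def distrib_left exp_add)

lemma Ex_cnj: "cnj (Ecis x) = Ecis (- x)"
  by (simp add: Ecis_def exp_cnj)

lemma Re_Ex: "Re (Ecis x) = cos x" and Im_Ex: "Im (Ecis x) = sin x"
  by (simp_all add: Ecis_def Re_exp Im_exp)

lemma norm_Ex [simp]: "norm (Ecis x) = 1"
  by (simp add: Ecis_def)

lemma Ex_pow: "Ecis x ^ j = Ecis (real j * x)"
  by (simp add: Ecis_def exp_of_nat_mult [symmetric] algebra_simps)

lemma Ex_eq_1_iff: "Ecis x = 1 \<longleftrightarrow> (\<exists>k::int. x = 2 * pi * of_int k)"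
  by (auto simp: Ecis_def exp_eq_1)

lemma Ex_2pi_int: "Ecis (2 * pi * of_int k) = 1"
  using Ex_eq_1_iff by blast

lemma PS0:
  assumes "n > 0" "\<not> (int n dvd k)"
  shows "(\<Sum>j<n. Ecis (of_int k * (\<alpha> + pi * (2 * real j + 1) / real n))) = 0"
proof -
  define w where "w = Ecis (2 * pi * of_int k / real n)"
  have trm: "Ecis (of_int k * (\<alpha> + pi * (2 * real j + 1) / real n)) =
        Ecis (of_int k * \<alpha> + of_int k * pi / real n) * w ^ j" for j
  proof -
    have "of_int k * (\<alpha> + pi * (2 * real j + 1) / real n) =
          (of_int k * \<alpha> + of_int k * pi / real n) + real j * (2 * pi * of_int k / real n)"
      using assms(1) by (simp add: field_simps)
    then show ?thesis by (simp add: w_def Ex_pow Ex_add)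
  qed
  have w1: "w \<noteq> 1"
  proof
    assume "w = 1"
    then obtain m :: int where "2 * pi * of_int k / real n = 2 * pi * of_int m"
      unfolding w_def Ex_eq_1_iff by blast
    then have "real_of_int k = real n * of_int m" using assms(1)
      by (simp add: field_simps)
    then have "k = int n * m"
      by (metis of_int_eq_iff of_int_mult of_int_of_nat_eq)
    then show False using assms(2) by simp
  qed
  have wn: "w ^ n = 1"
  proof -
    have "w ^ n = Ecis (real n * (2 * pi * of_int k / real n))" by (simp add: w_def Ex_pow)
    also have "real n * (2 * pi * of_int k / real n) = 2 * pi * of_int k" using assms(1) by simp
    finally show ?thesis by (simp add: Ex_2pi_int)
  qed
  have "(\<Sum>j<n. w ^ j) = 0"
    using geometric_sum[OF w1, of n] wn by simp
  then show ?thesis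
    by (simp add: trm sum_distrib_left [symmetric])
qed

lemma Ex_n_theta:
  assumes "n > 0"
  shows "Ecis (real n * (\<alpha> + pi * (2 * real j + 1) / real n)) = - Ecis (real n * \<alpha>)"
proof -
  have "real n * (\<alpha> + pi * (2 * real j + 1) / real n) = real n * \<alpha> + pi + 2 * pi * of_int (int j)"
    using assms by (simp add: field_simps)
  then show ?thesis
    by (simp add: Ex_add Ex_2pi_int) (simp add: Ecis_def exp_eq_polar cis_pi)
qed

lemma not_dvd_small:
  fixes x :: int
  assumes "x \<noteq> 0" "\<bar>x\<bar> < int n"
  shows "\<not> int n dvd x"
proof
  assume "int n dvd x"
  then have "\<bar>int n\<bar> \<le> \<bar>x\<bar>" by (rule dvd_imp_le_int[OF assms(1)])
  then show False using assms(2) by simp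
qed

lemma sum_if_eq: "(\<Sum>(i::nat)<n. if i = m then b i else (0::complex)) = (if m < n then b m else 0)"
  by (induction n) auto

lemma fourier_main:
  fixes a :: "nat \<Rightarrow> complex" and n m :: nat and r \<alpha> :: real and \<gamma> :: complex
  defines "Z \<equiv> \<lambda>\<theta>. a 0 + (\<Sum>i<n. a i * Ecis (real (n - i) * \<theta>))"
  defines "th \<equiv> \<lambda>j. \<alpha> + pi * (2 * real j + 1) / real n"
  assumes n: "n \<ge> 1" and a0: "a 0 = complex_of_real r"
    and hyp: "\<And>\<theta>. 0 \<le> Re (Z \<theta>)"
    and m: "1 \<le> m" "m < n" and g: "norm \<gamma> \<le> 1"
  shows "Re (\<gamma> * (a (n - m) - cnj (a m) * Ecis (- (real n * \<alpha>)))) \<le> 2 * r * (1 - cos (real n * \<alpha>))"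
proof -
  have npos: "n > 0" using n by simp
  have exn: "Ecis (real n * th j) = - Ecis (real n * \<alpha>)" for j
    unfolding th_def using Ex_n_theta[OF npos] .
  have inner0: "(\<Sum>j<n. Ecis (real (n - i) * th j)) = (if i = 0 then - (of_nat n * Ecis (real n * \<alpha>)) else 0)"
    if "i < n" for i
  proof (cases "i = 0")
    case True
    then show ?thesis by (simp add: exn)
  next
    case False
    have "real (n - i) = of_int (int (n - i))" by simp
    moreover have "\<not> int n dvd int (n - i)"
      by (rule not_dvd_small) (use that False in auto)
    ultimately show ?thesis using PS0[OF npos, of "int (n - i)" \<alpha>] False
      unfolding th_def by simp
  qed
  have A: "(\<Sum>j<n. Z (th j)) = of_nat n * a 0 - of_nat n * a 0 * Ecis (real n * \<alpha>)"
  proof -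
    have e1: "(\<Sum>j<n. Z (th j)) = (\<Sum>j<n. a 0) + (\<Sum>j<n. \<Sum>i<n. a i * Ecis (real (n - i) * th j))"
      unfolding Z_def by (rule sum.distrib)
    have e2: "(\<Sum>j<n. \<Sum>i<n. a i * Ecis (real (n - i) * th j)) = (\<Sum>i<n. \<Sum>j<n. a i * Ecis (real (n - i) * th j))"
      by (rule sum.swap)
    have e3: "(\<Sum>i<n. \<Sum>j<n. a i * Ecis (real (n - i) * th j)) = (\<Sum>i<n. a i * (\<Sum>j<n. Ecis (real (n - i) * th j)))"
      by (simp only: sum_distrib_left)
    have e4: "(\<Sum>i<n. a i * (\<Sum>j<n. Ecis (real (n - i) * th j))) =
        (\<Sum>i<n. if i = 0 then a i * (- (of_nat n * Ecis (real n * \<alpha>))) else 0)"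
      by (intro sum.cong refl, subst inner0) auto
    have e5: "(\<Sum>i<n. if i = 0 then a i * (- (of_nat n * Ecis (real n * \<alpha>))) else 0) = a 0 * (- (of_nat n * Ecis (real n * \<alpha>)))"
      using npos by (subst sum_if_eq) simp
    show ?thesis unfolding e1 e2 e3 e4 e5 by (simp add: algebra_simps)
  qed
  have ReA: "(\<Sum>j<n. Re (Z (th j))) = real n * r * (1 - cos (real n * \<alpha>))"
  proof -
    have "(\<Sum>j<n. Re (Z (th j))) = Re (\<Sum>j<n. Z (th j))" by simp
    also have "\<dots> = real n * r * (1 - cos (real n * \<alpha>))"
      unfolding A a0 by (simp add: Re_Ex algebra_simps)
    finally show ?thesis .
  qed
  have innerB1: "(\<Sum>j<n. Ecis (real (n - i) * th j) * Ecis (- (real m * th j))) = (if i = n - m then of_nat n else 0)"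
    if "i < n" for i
  proof -
    have e: "Ecis (real (n - i) * th j) * Ecis (- (real m * th j)) = Ecis (of_int (int n - int i - int m) * th j)" for j
    proof -
      have "real (n - i) * th j + - (real m * th j) = of_int (int n - int i - int m) * th j"
        using that by (simp add: of_nat_diff algebra_simps)
      then show ?thesis by (metis Ex_add)
    qed
    show ?thesis
    proof (cases "i = n - m")
      case True
      then have z: "int n - int i - int m = 0" using m by simp
      have "Ecis (real (n - i) * th j) * Ecis (- (real m * th j)) = 1" for j
        by (simp only: e z) (simp add: Ecis_def)
      then show ?thesis using True by simp
    next
      case False
      have "\<not> int n dvd (int n - int i - int m)"
        by (rule not_dvd_small) (use that False m in auto)
      then show ?thesis using PS0[OF npos, of "int n - int i - int m" \<alpha>] False
        unfolding e unfolding th_def by simp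
    qed
  qed
  have innerB2: "(\<Sum>j<n. Ecis (- (real (n - i) * th j)) * Ecis (- (real m * th j))) =
        (if i = m then - (of_nat n * Ecis (- (real n * \<alpha>))) else 0)"
    if "i < n" for i
  proof -
    have e: "Ecis (- (real (n - i) * th j)) * Ecis (- (real m * th j)) = Ecis (of_int (int i - int n - int m) * th j)" for j
    proof -
      have "- (real (n - i) * th j) + - (real m * th j) = of_int (int i - int n - int m) * th j"
        using that by (simp add: of_nat_diff algebra_simps)
      then show ?thesis by (metis Ex_add)
    qed
    show ?thesis
    proof (cases "i = m")
      case True
      have "Ecis (of_int (int i - int n - int m) * th j) = - Ecis (- (real n * \<alpha>))" for j
      proof -
        have "Ecis (of_int (int i - int n - int m) * th j) = cnj (Ecis (real n * th j))"
          using True by (simp add: Ex_cnj)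
        also have "\<dots> = - Ecis (- (real n * \<alpha>))" by (simp add: exn Ex_cnj)
        finally show ?thesis .
      qed
      then have "Ecis (- (real (n - i) * th j)) * Ecis (- (real m * th j)) = - Ecis (- (real n * \<alpha>))" for j
        by (simp only: e)
      then show ?thesis using True by simp
    next
      case False
      have "\<not> int n dvd (int i - int m)"
        by (rule not_dvd_small) (use that False m in auto)
      have "\<not> int n dvd (int i - int n - int m)"
      proof
        assume h: "int n dvd (int i - int n - int m)"
        have "int n dvd (int i - int n - int m) + int n" using h by (rule dvd_add) simp
        then show False using \<open>\<not> int n dvd (int i - int m)\<close> by simp
      qed
      then show ?thesis using PS0[OF npos, of "int i - int n - int m" \<alpha>] False
        unfolding e unfolding th_def by simp
    qed
  qed
  have a0term: "(\<Sum>j<n. Ecis (- (real m * th j))) = 0"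
  proof -
    have "\<not> int n dvd (- int m)"
      by (rule not_dvd_small) (use m in auto)
    then show ?thesis using PS0[OF npos, of "- int m" \<alpha>] unfolding th_def by simp
  qed
  have B1: "(\<Sum>j<n. Z (th j) * Ecis (- (real m * th j))) = of_nat n * a (n - m)"
  proof -
    have e1: "(\<Sum>j<n. Z (th j) * Ecis (- (real m * th j))) =
        (\<Sum>j<n. a 0 * Ecis (- (real m * th j))) +
        (\<Sum>j<n. \<Sum>i<n. a i * (Ecis (real (n - i) * th j) * Ecis (- (real m * th j))))"
      unfolding Z_def distrib_right sum.distrib sum_distrib_right mult.assoc ..
    have e2: "(\<Sum>j<n. \<Sum>i<n. a i * (Ecis (real (n - i) * th j) * Ecis (- (real m * th j)))) =
        (\<Sum>i<n. \<Sum>j<n. a i * (Ecis (real (n - i) * th j) * Ecis (- (real m * th j))))"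
      by (rule sum.swap)
    have e3: "(\<Sum>i<n. \<Sum>j<n. a i * (Ecis (real (n - i) * th j) * Ecis (- (real m * th j)))) =
        (\<Sum>i<n. a i * (\<Sum>j<n. Ecis (real (n - i) * th j) * Ecis (- (real m * th j))))"
      by (simp only: sum_distrib_left)
    have e4: "(\<Sum>i<n. a i * (\<Sum>j<n. Ecis (real (n - i) * th j) * Ecis (- (real m * th j)))) =
        (\<Sum>i<n. if i = n - m then a i * of_nat n else 0)"
      by (intro sum.cong refl, subst innerB1) auto
    have e5: "(\<Sum>i<n. if i = n - m then a i * of_nat n else 0) = a (n - m) * of_nat n"
      using m by (subst sum_if_eq) simp
    have e6: "(\<Sum>j<n. a 0 * Ecis (- (real m * th j))) = 0"
      by (simp only: sum_distrib_left[symmetric] a0term) simp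
    show ?thesis unfolding e1 e2 e3 e4 e5 e6 by simp
  qed
  have cnjZ: "cnj (Z \<theta>) = cnj (a 0) + (\<Sum>i<n. cnj (a i) * Ecis (- (real (n - i) * \<theta>)))" for \<theta>
    unfolding Z_def by (simp add: Ex_cnj)
  have B2: "(\<Sum>j<n. cnj (Z (th j)) * Ecis (- (real m * th j))) = - (of_nat n * cnj (a m) * Ecis (- (real n * \<alpha>)))"
  proof -
    have e1: "(\<Sum>j<n. cnj (Z (th j)) * Ecis (- (real m * th j))) =
        (\<Sum>j<n. cnj (a 0) * Ecis (- (real m * th j))) +
        (\<Sum>j<n. \<Sum>i<n. cnj (a i) * (Ecis (- (real (n - i) * th j)) * Ecis (- (real m * th j))))"
      unfolding cnjZ distrib_right sum.distrib sum_distrib_right mult.assoc ..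
    have e2: "(\<Sum>j<n. \<Sum>i<n. cnj (a i) * (Ecis (- (real (n - i) * th j)) * Ecis (- (real m * th j)))) =
        (\<Sum>i<n. \<Sum>j<n. cnj (a i) * (Ecis (- (real (n - i) * th j)) * Ecis (- (real m * th j))))"
      by (rule sum.swap)
    have e3: "(\<Sum>i<n. \<Sum>j<n. cnj (a i) * (Ecis (- (real (n - i) * th j)) * Ecis (- (real m * th j)))) =
        (\<Sum>i<n. cnj (a i) * (\<Sum>j<n. Ecis (- (real (n - i) * th j)) * Ecis (- (real m * th j))))"
      by (simp only: sum_distrib_left)
    have e4: "(\<Sum>i<n. cnj (a i) * (\<Sum>j<n. Ecis (- (real (n - i) * th j)) * Ecis (- (real m * th j)))) =
        (\<Sum>i<n. if i = m then cnj (a i) * (- (of_nat n * Ecis (- (real n * \<alpha>)))) else 0)"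
      by (intro sum.cong refl, subst innerB2) auto
    have e5: "(\<Sum>i<n. if i = m then cnj (a i) * (- (of_nat n * Ecis (- (real n * \<alpha>)))) else 0) =
        cnj (a m) * (- (of_nat n * Ecis (- (real n * \<alpha>))))"
      using m by (subst sum_if_eq) simp
    have e6: "(\<Sum>j<n. cnj (a 0) * Ecis (- (real m * th j))) = 0"
      by (simp only: sum_distrib_left[symmetric] a0term) simp
    show ?thesis unfolding e1 e2 e3 e4 e5 e6 by simp
  qed
  have B: "(\<Sum>j<n. of_real (Re (Z (th j))) * Ecis (- (real m * th j))) =
      of_nat n / 2 * (a (n - m) - cnj (a m) * Ecis (- (real n * \<alpha>)))"
  proof -
    have re: "of_real (Re z) * w = (z * w + cnj z * w) / 2" for z w :: complex
      by (simp add: complex_add_cnj distrib_right[symmetric])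
    have "(\<Sum>j<n. of_real (Re (Z (th j))) * Ecis (- (real m * th j))) =
       (\<Sum>j<n. (Z (th j) * Ecis (- (real m * th j)) + cnj (Z (th j)) * Ecis (- (real m * th j))) / 2)"
      by (simp only: re)
    also have "\<dots> = ((\<Sum>j<n. Z (th j) * Ecis (- (real m * th j))) + (\<Sum>j<n. cnj (Z (th j)) * Ecis (- (real m * th j)))) / 2"
      by (simp only: sum_divide_distrib[symmetric] sum.distrib)
    also have "\<dots> = of_nat n / 2 * (a (n - m) - cnj (a m) * Ecis (- (real n * \<alpha>)))"
      unfolding B1 B2 by (simp add: field_simps)
    finally show ?thesis .
  qed
  have nonneg: "0 \<le> (\<Sum>j<n. Re (Z (th j)) * (1 - Re (\<gamma> * Ecis (- (real m * th j)))))"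
  proof (rule sum_nonneg)
    fix j assume "j \<in> {..<n}"
    have "Re (\<gamma> * Ecis (- (real m * th j))) \<le> norm (\<gamma> * Ecis (- (real m * th j)))"
      by (rule complex_Re_le_cmod)
    also have "\<dots> \<le> 1" using g by (simp add: norm_mult)
    finally show "0 \<le> Re (Z (th j)) * (1 - Re (\<gamma> * Ecis (- (real m * th j))))"
      using hyp by simp
  qed
  have tm: "Re (Z (th j)) * (1 - Re (\<gamma> * Ecis (- (real m * th j)))) =
      Re (Z (th j)) - Re (\<gamma> * (of_real (Re (Z (th j))) * Ecis (- (real m * th j))))" for j
  proof -
    have "\<gamma> * (of_real (Re (Z (th j))) * Ecis (- (real m * th j))) = of_real (Re (Z (th j))) * (\<gamma> * Ecis (- (real m * th j)))"
      by (simp only: mult.left_commute)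
    then show ?thesis by (simp add: right_diff_distrib)
  qed
  have "(\<Sum>j<n. Re (Z (th j)) * (1 - Re (\<gamma> * Ecis (- (real m * th j))))) =
      (\<Sum>j<n. Re (Z (th j))) - Re (\<gamma> * (\<Sum>j<n. of_real (Re (Z (th j))) * Ecis (- (real m * th j))))"
    by (simp only: tm sum_subtractf Re_sum sum_distrib_left)
  also have "\<dots> = real n * r * (1 - cos (real n * \<alpha>)) -
      real n / 2 * Re (\<gamma> * (a (n - m) - cnj (a m) * Ecis (- (real n * \<alpha>))))"
  proof -
    have rr: "Re (of_real c * w) = c * Re w" for c w by simp
    have eqn: "\<gamma> * (of_nat n / 2 * (a (n - m) - cnj (a m) * Ecis (- (real n * \<alpha>)))) =
        of_real (real n / 2) * (\<gamma> * (a (n - m) - cnj (a m) * Ecis (- (real n * \<alpha>))))"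
      by simp
    show ?thesis unfolding ReA B eqn rr ..
  qed
  finally have "0 \<le> real n * r * (1 - cos (real n * \<alpha>)) -
      real n / 2 * Re (\<gamma> * (a (n - m) - cnj (a m) * Ecis (- (real n * \<alpha>))))"
    using nonneg by linarith
  then have "real n * (Re (\<gamma> * (a (n - m) - cnj (a m) * Ecis (- (real n * \<alpha>))))) \<le>
      real n * (2 * r * (1 - cos (real n * \<alpha>)))"
    by (simp add: algebra_simps)
  then show ?thesis using npos by simp
qed

lemma choose_gamma:
  fixes W :: complex
  assumes "\<And>\<gamma>. norm \<gamma> \<le> 1 \<Longrightarrow> Re (\<gamma> * W) \<le> B"
  shows "norm W \<le> B"
proof (cases "W = 0")
  case True
  then show ?thesis using assms[of 0] by simp
next
  case False
  define \<gamma> where "\<gamma> = cnj W / of_real (norm W)"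
  have "norm \<gamma> = 1" using False by (simp add: \<gamma>_def norm_divide)
  moreover have "\<gamma> * W = of_real (norm W)"
  proof -
    have "cnj W * W = of_real ((norm W)^2)" by (metis complex_norm_square mult.commute of_real_power)
    then show ?thesis using False by (simp add: \<gamma>_def power2_eq_square)
  qed
  ultimately show ?thesis using assms[of \<gamma>] by simp
qed

lemma one_minus_cos_le: "0 \<le> x \<Longrightarrow> x \<le> pi \<Longrightarrow> 1 - cos x \<le> x^2 / 2"
proof -
  assume x: "0 \<le> x" "x \<le> pi"
  have c: "cos x = 1 - 2 * sin (x/2) ^ 2" using cos_double_sin[of "x/2"] by simp
  have s0: "0 \<le> sin (x/2)" using x by (intro sin_ge_zero) auto
  have s1: "sin (x/2) \<le> x/2" using x by (intro sin_x_le_x) auto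
  have "sin (x/2) ^ 2 \<le> (x/2)^2" using s0 s1 by (intro power_mono) auto
  then show ?thesis unfolding c by (simp add: power2_eq_square)
qed

lemma norm_one_minus_Ex_sq: "(norm (1 - Ecis (- x)))^2 = 2 * (1 - cos x)"
proof -
  have re: "Re (1 - Ecis (-x)) = 1 - cos x" by (simp add: Re_Ex)
  have im: "Im (1 - Ecis (-x)) = sin x" by (simp add: Im_Ex)
  have "(norm (1 - Ecis (- x)))^2 = (1 - cos x)^2 + (sin x)^2"
    by (subst cmod_power2) (simp only: re im)
  also have "\<dots> = 2 * (1 - cos x)"
    using sin_cos_squared_add[of x] by (simp add: power2_eq_square algebra_simps)
  finally show ?thesis .
qed

lemma fourier_kill:
  fixes a :: "nat \<Rightarrow> complex" and n i :: nat and r :: real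
  assumes n: "n \<ge> 1" and a0: "a 0 = complex_of_real r" and r: "r > 0"
    and hyp: "\<And>\<theta>. 0 \<le> Re (a 0 + (\<Sum>i<n. a i * Ecis (real (n - i) * \<theta>)))"
    and i: "1 \<le> i" "i < n"
  shows "a i = 0"
proof -
  note fm = fourier_main[OF n a0 hyp]
  have sym: "a (n - m) = cnj (a m)" if m: "1 \<le> m" "m < n" for m
  proof -
    have "Re (\<gamma> * (a (n - m) - cnj (a m))) \<le> 0" if "norm \<gamma> \<le> 1" for \<gamma>
      using fm[OF m that, of 0] by (simp add: Ecis_def)
    then have "norm (a (n - m) - cnj (a m)) \<le> 0" by (rule choose_gamma)
    then show ?thesis by simp
  qed
  define m where "m = n - i"
  have m: "1 \<le> m" "m < n" and nm: "n - m = i" using i by (auto simp: m_def)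
  define b where "b = a i"
  have cb: "cnj (a m) = b" using sym[OF m] nm by (simp add: b_def)
  have key: "norm b * norm (1 - Ecis (- x)) \<le> 2 * r * (1 - cos x)" for x
  proof -
    have nx: "real n * (x / real n) = x" using n by simp
    have "Re (\<gamma> * (b * (1 - Ecis (- x)))) \<le> 2 * r * (1 - cos x)" if "norm \<gamma> \<le> 1" for \<gamma>
      using fm[OF m that, of "x / real n"] unfolding nx nm cb b_def by (simp add: algebra_simps)
    then have "norm (b * (1 - Ecis (- x))) \<le> 2 * r * (1 - cos x)" by (rule choose_gamma)
    then show ?thesis by (simp add: norm_mult)
  qed
  have bound: "(norm b)^2 \<le> r^2 * x^2" if x: "0 < x" "x \<le> pi" for x
  proof -
    define u where "u = 1 - cos x"
    have upos: "u > 0" using cos_monotone_0_pi[of 0 x] x by (simp add: u_def)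
    have ule: "u \<le> x^2 / 2" using one_minus_cos_le[of x] x by (simp add: u_def)
    have "(norm b * norm (1 - Ecis (- x)))^2 \<le> (2 * r * u)^2"
      using key[of x] by (intro power_mono) (auto simp: u_def)
    moreover have "(norm b * norm (1 - Ecis (- x)))^2 = (norm b)^2 * (2*u)"
      by (simp only: power_mult_distrib norm_one_minus_Ex_sq u_def)
    ultimately have "(norm b)^2 * (2 * u) \<le> (2 * r * u)^2"
      by linarith
    moreover have "(2 * r * u)^2 = (2 * r^2 * u) * (2 * u)"
      by (simp add: power2_eq_square)
    ultimately have "(norm b)^2 * (2 * u) \<le> (2 * r^2 * u) * (2 * u)"
      by linarith
    then have "(norm b)^2 \<le> 2 * r^2 * u" using upos by (simp add: mult.commute mult.left_commute)
    also have "\<dots> \<le> 2 * r^2 * (x^2 / 2)" using ule by (intro mult_left_mono) auto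
    finally show ?thesis by simp
  qed
  show ?thesis
  proof (rule ccontr)
    assume "a i \<noteq> 0"
    then have bpos: "norm b > 0" by (simp add: b_def)
    define x where "x = min pi (norm b / (2 * r))"
    have x: "0 < x" "x \<le> pi" using bpos r by (auto simp: x_def)
    have "x \<le> norm b / (2 * r)" by (simp add: x_def)
    then have "r * x \<le> norm b / 2" using r by (simp add: field_simps)
    then have "(r * x)^2 \<le> (norm b / 2)^2" using x r by (intro power_mono) auto
    then have h2: "r^2 * x^2 \<le> (norm b)^2 / 4"
      by (simp add: power_mult_distrib power_divide)
    have "(norm b)^2 > 0" using bpos by simp
    then show False using h2 bound[OF x] by linarith
  qed
qed

lemma fps_expansion_unique:
  assumes "f has_fps_expansion F"
  shows "fps_expansion f 0 = F"
  by (rule fps_ext) (simp add: fps_expansion_def fps_nth_fps_expansion[OF assms])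

lemma tc_expansion:
  assumes "f has_fps_expansion F"
  shows "taylor_coeff f k = F $ k"
  by (simp add: taylor_coeff_def fps_nth_fps_expansion[OF assms])

lemma disc_expansion:
  assumes "f holomorphic_on ball 0 1"
  shows "f has_fps_expansion fps_expansion f 0"
  using assms by (intro has_fps_expansion_fps_expansion[of "ball 0 1"]) auto

lemma geom_inverse:
  fixes c :: complex
  shows "inverse (1 - fps_const c * fps_X) = Abs_fps (\<lambda>k. c ^ k)"
proof (rule fps_inverse_unique)
  show "(1 - fps_const c * fps_X) * Abs_fps (\<lambda>k. c ^ k) = 1"
  proof (rule fps_ext)
    fix k
    show "((1 - fps_const c * fps_X) * Abs_fps (\<lambda>k. c ^ k)) $ k = 1 $ k"
      by (cases k) (simp_all add: algebra_simps mult.assoc)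
  qed
qed

lemma sum_upto_split: "(\<Sum>i=0..(n::nat). g i) = (\<Sum>i<n. g i) + (g n :: complex)"
proof -
  have "{0..n} = insert n {..<n}" by auto
  then show ?thesis by (simp add: add.commute)
qed

lemma mobius_bound:
  fixes u :: complex and \<rho> :: real
  assumes u: "norm u \<le> 1" and \<rho>: "0 \<le> \<rho>" "\<rho> \<le> 1"
  shows "norm (complex_of_real ((1 + \<rho>) / 2) * (1 - u)) \<le> norm (1 - complex_of_real \<rho> * u)"
proof -
  define x where "x = Re u"
  define y where "y = Im u"
  define l where "l = (1 + \<rho>) / 2"
  have s: "x^2 + y^2 \<le> 1" using u by (simp add: x_def y_def cmod_power2[symmetric] power_le_one)
  have e1: "(norm (1 - complex_of_real \<rho> * u))^2 = (1 - \<rho> * x)^2 + (\<rho> * y)^2"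
    by (simp add: cmod_power2 x_def y_def)
  have e2: "(norm (complex_of_real l * (1 - u)))^2 = l^2 * ((1 - x)^2 + y^2)"
    by (simp add: norm_mult power_mult_distrib cmod_power2 x_def y_def)
  have y0: "0 \<le> y^2" by simp
  have "(-x)^2 \<le> 1^2" using s y0 by (simp only: power2_minus power_one)
  then have x1: "-1 \<le> x" using power2_le_imp_le[of "-x" 1] by simp
  have id: "(1 - \<rho> * x)^2 + (\<rho> * y)^2 - l^2 * ((1 - x)^2 + y^2) =
      (1 - \<rho>)^2 * (1 + x) / 2 + (1 - (x^2 + y^2)) * (l^2 - \<rho>^2)"
    by (simp add: l_def power2_eq_square field_simps)
  have "\<rho> \<le> l" using \<rho> by (simp add: l_def)
  then have "\<rho>^2 \<le> l^2" using \<rho> by (intro power_mono) auto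
  then have "l^2 - \<rho>^2 \<ge> 0" by simp
  then have "0 \<le> (1 - \<rho>)^2 * (1 + x) / 2 + (1 - (x^2 + y^2)) * (l^2 - \<rho>^2)"
  proof -
    have t1: "0 \<le> (1 - \<rho>)^2 * (1 + x) / 2" using x1 by simp
    have t2: "0 \<le> (1 - (x^2 + y^2)) * (l^2 - \<rho>^2)"
      using s \<open>l^2 - \<rho>^2 \<ge> 0\<close> by (intro mult_nonneg_nonneg) auto
    show ?thesis using t1 t2 by linarith
  qed
  then have "(norm (complex_of_real l * (1 - u)))^2 \<le> (norm (1 - complex_of_real \<rho> * u))^2"
    unfolding e1 e2 using id by linarith
  then show ?thesis unfolding l_def by (rule power2_le_imp_le) simp
qed

lemma variation_step:
  fixes f :: "complex \<Rightarrow> complex" and n :: nat and A :: real and \<epsilon> :: complex and \<sigma> :: real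
  assumes fB: "f \<in> krzyz_class"
    and ext: "\<forall>g\<in>krzyz_class. norm (taylor_coeff g n) \<le> norm (taylor_coeff f n)"
    and an: "taylor_coeff f n = complex_of_real A" and A: "0 \<le> A"
    and \<epsilon>: "norm \<epsilon> = 1" and \<sigma>: "0 < \<sigma>" "\<sigma> < 1"
  shows "0 \<le> A/2 + (1 - \<sigma>/2) * Re (\<Sum>i<n. taylor_coeff f i * complex_of_real ((1-\<sigma>)^(n-i-1)) * \<epsilon>^(n-i))"
proof -
  define \<rho> where "\<rho> = 1 - \<sigma>"
  define l where "l = 1 - \<sigma>/2"
  define c where "c = complex_of_real \<rho> * \<epsilon>"
  define h where "h = (\<lambda>z. complex_of_real l * (1 - \<epsilon> * z) * inverse (1 - c * z))"
  define G where "G = Abs_fps (\<lambda>k. c ^ k)"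
  define H where "H = fps_const (complex_of_real l) * (1 - fps_const \<epsilon> * fps_X) * G"
  have \<rho>: "0 < \<rho>" "\<rho> < 1" using \<sigma> by (auto simp: \<rho>_def)
  have lrho: "l = (1 + \<rho>) / 2" by (simp add: l_def \<rho>_def field_simps)
  have fhol: "f holomorphic_on ball 0 1" and fnz: "\<And>z. z \<in> ball 0 1 \<Longrightarrow> 0 < norm (f z)"
    and fle: "\<And>z. z \<in> ball 0 1 \<Longrightarrow> norm (f z) \<le> 1"
    using fB by (auto simp: krzyz_class_def)
  have c_lt: "norm (c * z) < 1" if "z \<in> ball 0 1" for z
  proof -
    have "norm (c * z) = \<rho> * norm z" using \<rho> \<epsilon> by (simp add: c_def norm_mult)
    also have "\<dots> \<le> norm z" using \<rho> by (intro mult_left_le_one_le) auto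
    also have "\<dots> < 1" using that by simp
    finally show ?thesis .
  qed
  have den_nz: "1 - c * z \<noteq> 0" if "z \<in> ball 0 1" for z
  proof
    assume "1 - c * z = 0"
    then have "c * z = 1" by simp
    then show False using c_lt[OF that] by simp
  qed
  have e1: "(\<lambda>z. 1 - c * z) has_fps_expansion 1 - fps_const c * fps_X"
    by (rule has_fps_expansion_diff[OF has_fps_expansion_1 has_fps_expansion_cmult_left[OF has_fps_expansion_fps_X]])
  have e2: "(\<lambda>z. inverse (1 - c * z)) has_fps_expansion G"
    using has_fps_expansion_inverse[OF e1] by (simp add: G_def geom_inverse)
  have e3: "(\<lambda>z. complex_of_real l * (1 - \<epsilon> * z)) has_fps_expansion
        fps_const (complex_of_real l) * (1 - fps_const \<epsilon> * fps_X)"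
    by (rule has_fps_expansion_cmult_left[OF has_fps_expansion_diff[OF has_fps_expansion_1 has_fps_expansion_cmult_left[OF has_fps_expansion_fps_X]]])
  have hexp: "h has_fps_expansion H"
    unfolding h_def H_def by (rule has_fps_expansion_mult[OF e3 e2])
  have fexp: "f has_fps_expansion fps_expansion f 0" by (rule disc_expansion[OF fhol])
  have fhexp: "(\<lambda>z. f z * h z) has_fps_expansion fps_expansion f 0 * H"
    by (rule has_fps_expansion_mult[OF fexp hexp])
  have Hn: "H $ k = complex_of_real l * (c ^ k - \<epsilon> * (if k = 0 then 0 else c ^ (k - 1)))" for k
  proof -
    have "H = fps_const (complex_of_real l) * (G - fps_const \<epsilon> * (fps_X * G))"
      unfolding H_def by (simp only: mult.assoc left_diff_distrib mult_1)
    then have "H $ k = complex_of_real l * (G $ k - \<epsilon> * (fps_X * G) $ k)"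
      by (simp only: fps_mult_left_const_nth fps_sub_nth)
    also have "(fps_X * G) $ k = (if k = 0 then 0 else c ^ (k - 1))"
      by (simp only: fps_X_mult_nth G_def fps_nth_Abs_fps)
    also have "G $ k = c ^ k" by (simp only: G_def fps_nth_Abs_fps)
    finally show ?thesis .
  qed
  have Hi: "H $ (n - i) = - (complex_of_real l * complex_of_real \<sigma> * complex_of_real (\<rho>^(n-i-1)) * \<epsilon>^(n-i))"
    if "i < n" for i
  proof -
    define k where "k = n - i - 1"
    have k: "n - i = Suc k" using that by (simp add: k_def)
    have kk: "n - i - 1 = k" by (simp add: k_def)
    have s1: "H $ (n - i) = complex_of_real l * (c * c ^ k - \<epsilon> * c ^ k)" unfolding k Hn by simp
    have s2: "c * c ^ k - \<epsilon> * c ^ k = (c - \<epsilon>) * c ^ k" by (simp only: left_diff_distrib)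
    have s3: "c - \<epsilon> = - (complex_of_real \<sigma> * \<epsilon>)"
      by (simp add: c_def \<rho>_def left_diff_distrib)
    have s4: "c ^ k = complex_of_real (\<rho>^k) * \<epsilon>^k" by (simp only: c_def power_mult_distrib of_real_power)
    have "H $ (n - i) = - (complex_of_real l * complex_of_real \<sigma> * complex_of_real (\<rho>^k) * (\<epsilon> * \<epsilon>^k))"
      unfolding s1 unfolding s2 unfolding s3 unfolding s4 by (simp only: mult_ac minus_mult_left minus_mult_right)
    then show ?thesis unfolding kk unfolding k by (simp only: power_Suc)
  qed
  define S where "S = (\<Sum>i<n. taylor_coeff f i * complex_of_real ((1-\<sigma>)^(n-i-1)) * \<epsilon>^(n-i))"
  have T: "taylor_coeff (\<lambda>z. f z * h z) n = complex_of_real l * complex_of_real A - complex_of_real l * complex_of_real \<sigma> * S"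
  proof -
    have "taylor_coeff (\<lambda>z. f z * h z) n = (fps_expansion f 0 * H) $ n"
      by (rule tc_expansion[OF fhexp])
    also have "\<dots> = (\<Sum>i<n. fps_expansion f 0 $ i * H $ (n - i)) + fps_expansion f 0 $ n * H $ 0"
      by (simp add: fps_mult_nth sum_upto_split)
    also have "(\<Sum>i<n. fps_expansion f 0 $ i * H $ (n - i)) =
        (\<Sum>i<n. - (complex_of_real l * complex_of_real \<sigma> * (taylor_coeff f i * complex_of_real ((1-\<sigma>)^(n-i-1)) * \<epsilon>^(n-i))))"
      by (intro sum.cong refl) (simp add: Hi taylor_coeff_def fps_expansion_def \<rho>_def algebra_simps)
    also have "\<dots> = - (complex_of_real l * complex_of_real \<sigma> * S)"
      by (simp add: S_def sum_distrib_left sum_negf)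
    also have "fps_expansion f 0 $ n * H $ 0 = complex_of_real l * complex_of_real A"
      using an by (simp add: Hn taylor_coeff_def fps_expansion_def)
    finally show ?thesis by simp
  qed
  have gB: "(\<lambda>z. f z * h z) \<in> krzyz_class"
    unfolding krzyz_class_def
  proof (intro CollectI conjI ballI)
    show "(\<lambda>z. f z * h z) holomorphic_on ball 0 1"
      unfolding h_def using fhol den_nz by (intro holomorphic_intros) auto
  next
    fix z :: complex assume z: "z \<in> ball 0 1"
    have uz: "norm (\<epsilon> * z) < 1" using z \<epsilon> by (simp add: norm_mult)
    have num_nz: "1 - \<epsilon> * z \<noteq> 0"
    proof
      assume "1 - \<epsilon> * z = 0"
      then have "\<epsilon> * z = 1" by simp
      then show False using uz by simp
    qed
    have lpos: "l > 0" using \<sigma> by (simp add: l_def)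
    have hnz: "h z \<noteq> 0" using num_nz den_nz[OF z] lpos by (simp add: h_def)
    show "0 < norm (f z * h z)" using fnz[OF z] hnz by (simp add: norm_mult)
    have mb: "norm (complex_of_real l * (1 - \<epsilon> * z)) \<le> norm (1 - complex_of_real \<rho> * (\<epsilon> * z))"
      unfolding lrho by (rule mobius_bound) (use uz \<rho> in auto)
    have "norm (h z) = norm (complex_of_real l * (1 - \<epsilon> * z)) / norm (1 - c * z)"
      by (simp add: h_def norm_mult norm_inverse divide_inverse)
    also have "\<dots> \<le> 1"
      using mb den_nz[OF z] by (simp add: c_def mult.assoc)
    finally have "norm (h z) \<le> 1" .
    then show "norm (f z * h z) \<le> 1"
      using fle[OF z] by (simp add: norm_mult mult_le_one)
  qed
  have "norm (taylor_coeff (\<lambda>z. f z * h z) n) \<le> A"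
    using ext gB an A by auto
  then have "Re (taylor_coeff (\<lambda>z. f z * h z) n) \<le> A"
    using complex_Re_le_cmod order_trans by blast
  then have "l * A - l * \<sigma> * Re S \<le> A" unfolding T by simp
  then have "\<sigma> * (A/2 + l * Re S) \<ge> 0" by (simp add: l_def algebra_simps)
  then have "A/2 + l * Re S \<ge> 0" using \<sigma> by (simp add: zero_le_mult_iff)
  then show ?thesis by (simp add: S_def l_def)
qed

lemma variation:
  fixes f :: "complex \<Rightarrow> complex" and n :: nat and A :: real and \<epsilon> :: complex
  assumes fB: "f \<in> krzyz_class"
    and ext: "\<forall>g\<in>krzyz_class. norm (taylor_coeff g n) \<le> norm (taylor_coeff f n)"
    and an: "taylor_coeff f n = complex_of_real A" and A: "0 \<le> A"
    and \<epsilon>: "norm \<epsilon> = 1"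
  shows "0 \<le> A/2 + Re (\<Sum>i<n. taylor_coeff f i * \<epsilon>^(n-i))"
proof -
  define F where "F = (\<lambda>\<sigma>::real. A/2 + (1 - \<sigma>/2) * Re (\<Sum>i<n. taylor_coeff f i * complex_of_real ((1-\<sigma>)^(n-i-1)) * \<epsilon>^(n-i)))"
  have lim: "(F \<longlongrightarrow> F 0) (at_right 0)"
    unfolding F_def by (intro tendsto_intros) auto
  have pos: "0 \<le> F \<sigma>" if "0 < \<sigma>" "\<sigma> < 1" for \<sigma>
    unfolding F_def by (rule variation_step[OF fB ext an A \<epsilon> that])
  have ev: "eventually (\<lambda>\<sigma>. 0 \<le> F \<sigma>) (at_right 0)"
    unfolding eventually_at_right_field
    using pos by (intro exI[of _ "1::real"]) auto
  have "0 \<le> F 0"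
    by (rule tendsto_lowerbound[OF lim ev]) simp
  then show ?thesis by (simp add: F_def)
qed

lemma tc_fps: "taylor_coeff f k = fps_expansion f 0 $ k"
  by (simp add: taylor_coeff_def fps_expansion_def)

lemma fps_rec:
  fixes Q R :: "complex fps"
  assumes ode: "fps_deriv Q = fps_deriv R * Q" and m: "m \<ge> 1"
    and z: "\<And>i. 0 < i \<Longrightarrow> i < m \<Longrightarrow> R $ i = 0"
  shows "Q $ m = R $ m * Q $ 0"
proof -
  define k where "k = m - 1"
  have mk: "m = Suc k" using m by (simp add: k_def)
  have "of_nat m * Q $ m = fps_deriv Q $ k" by (simp add: mk)
  also have "\<dots> = (fps_deriv R * Q) $ k" by (simp only: ode)
  also have "\<dots> = (\<Sum>i=0..k. fps_deriv R $ i * Q $ (k - i))" by (rule fps_mult_nth)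
  also have "\<dots> = (\<Sum>i<k. fps_deriv R $ i * Q $ (k - i)) + fps_deriv R $ k * Q $ 0"
    by (simp add: sum_upto_split)
  also have "(\<Sum>i<k. fps_deriv R $ i * Q $ (k - i)) = 0"
  proof (rule sum.neutral, intro ballI)
    fix i assume "i \<in> {..<k}"
    then have "R $ Suc i = 0" using z[of "Suc i"] mk by simp
    then show "fps_deriv R $ i * Q $ (k - i) = 0" by simp
  qed
  also have "fps_deriv R $ k * Q $ 0 = of_nat m * (R $ m * Q $ 0)" by (simp add: mk)
  finally show ?thesis using m by simp
qed

lemma fps_rec_zero:
  fixes Q R :: "complex fps"
  assumes ode: "fps_deriv Q = fps_deriv R * Q"
    and z: "\<And>i. 0 < i \<Longrightarrow> i < n \<Longrightarrow> R $ i = 0"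
    and k: "0 < k" "k < n"
  shows "Q $ k = 0"
  using fps_rec[OF ode, of k] z k by auto

lemma fps_rec_inv:
  fixes Q R :: "complex fps"
  assumes ode: "fps_deriv Q = fps_deriv R * Q" and q0: "Q $ 0 \<noteq> 0"
    and z: "\<And>i. 0 < i \<Longrightarrow> i < n \<Longrightarrow> Q $ i = 0"
  shows "\<And>j. 0 < j \<Longrightarrow> j < n \<Longrightarrow> R $ j = 0"
proof -
  fix j show "0 < j \<Longrightarrow> j < n \<Longrightarrow> R $ j = 0"
  proof (induction j rule: less_induct)
    case (less j)
    have "Q $ j = R $ j * Q $ 0"
      by (rule fps_rec[OF ode]) (use less in auto)
    then show ?case using z[OF less.prems] q0 by simp
  qed
qed

lemma exp_ode:
  fixes p :: "complex \<Rightarrow> complex" and c :: complex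
  assumes hol: "p holomorphic_on ball 0 1"
  shows "fps_deriv (fps_expansion (\<lambda>z. exp (c * p z)) 0) =
         fps_deriv (fps_const c * fps_expansion p 0) * fps_expansion (\<lambda>z. exp (c * p z)) 0"
proof -
  define q where "q = (\<lambda>z. exp (c * p z))"
  have qhol: "q holomorphic_on ball 0 1" unfolding q_def using hol by (intro holomorphic_intros)
  have qexp: "q has_fps_expansion fps_expansion q 0" by (rule disc_expansion[OF qhol])
  have pexp: "p has_fps_expansion fps_expansion p 0" by (rule disc_expansion[OF hol])
  have d1: "deriv q has_fps_expansion fps_deriv (fps_expansion q 0)"
    by (rule has_fps_expansion_deriv[OF qexp])
  have d2: "(\<lambda>z. c * deriv p z * q z) has_fps_expansion (fps_const c * fps_deriv (fps_expansion p 0)) * fps_expansion q 0"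
    by (rule has_fps_expansion_mult[OF has_fps_expansion_cmult_left[OF has_fps_expansion_deriv[OF pexp]] qexp])
  have eq: "deriv q z = c * deriv p z * q z" if "z \<in> ball 0 1" for z
  proof -
    have "(p has_field_derivative deriv p z) (at z)"
      using holomorphic_derivI[OF hol open_ball that] .
    then have "(q has_field_derivative exp (c * p z) * (c * deriv p z)) (at z)"
      unfolding q_def by (auto intro!: derivative_eq_intros)
    then show ?thesis unfolding q_def by (simp add: DERIV_imp_deriv mult_ac)
  qed
  have ev: "eventually (\<lambda>z. deriv q z = c * deriv p z * q z) (nhds 0)"
    using eventually_nhds_in_open[of "ball 0 1" 0] eq by (auto elim: eventually_mono)
  have d3: "(\<lambda>z. c * deriv p z * q z) has_fps_expansion fps_deriv (fps_expansion q 0)"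
    using has_fps_expansion_cong[OF ev refl] d1 by simp
  have "fps_deriv (fps_expansion q 0) = (fps_const c * fps_deriv (fps_expansion p 0)) * fps_expansion q 0"
    using fps_expansion_unique[OF d3] fps_expansion_unique[OF d2] by simp
  then show ?thesis by (simp add: q_def)
qed

lemma exp_gt_strict:
  fixes x :: real
  assumes "x \<noteq> 0"
  shows "1 + x < exp x"
proof (cases "1 + x/2 \<ge> 0")
  case True
  have e: "exp x = exp (x/2) ^ 2" by (simp add: power2_eq_square exp_add[symmetric])
  have "(1 + x/2)^2 \<le> exp (x/2) ^ 2" using True by (intro power_mono) auto
  moreover have "1 + x < (1 + x/2)^2"
  proof -
    have "0 < x * x" using assms by (cases "x > 0") (auto simp: mult_neg_neg)
    then show ?thesis by (simp add: power2_eq_square algebra_simps)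
  qed
  ultimately show ?thesis unfolding e by linarith
next
  case False
  then have "1 + x < 0" by simp
  also have "0 < exp x" by simp
  finally show ?thesis .
qed

lemma schwarz_n:
  fixes \<psi> :: "complex \<Rightarrow> complex"
  assumes hol: "\<psi> holomorphic_on ball 0 1"
    and bnd: "\<And>z. z \<in> ball 0 1 \<Longrightarrow> norm (z ^ n * \<psi> z) \<le> 1"
    and z: "z \<in> ball 0 1"
  shows "norm (\<psi> z) \<le> 1"
proof -
  have step: "norm (\<psi> z) \<le> 1 / r ^ n" if r: "norm z < r" "r < 1" for r
  proof -
    have r0: "0 < r" using r(1) by (meson norm_ge_zero le_less_trans)
    have sub: "cball 0 r \<subseteq> ball (0::complex) 1" using r by auto
    show ?thesis
    proof (rule maximum_modulus_frontier[of \<psi> "cball 0 r"])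
      show "\<psi> holomorphic_on interior (cball 0 r)"
        using hol by (rule holomorphic_on_subset) (use r in auto)
      show "continuous_on (closure (cball 0 r)) \<psi>"
        using holomorphic_on_imp_continuous_on[OF hol] sub by (auto intro: continuous_on_subset)
      show "bounded (cball (0::complex) r)" by simp
      show "z \<in> cball 0 r" using r by simp
    next
      fix w :: complex assume "w \<in> frontier (cball 0 r)"
      then have w: "norm w = r" by simp
      then have "w \<in> ball 0 1" using r by simp
      then have "r ^ n * norm (\<psi> w) \<le> 1" using bnd[of w] w by (simp add: norm_mult norm_power)
      then show "norm (\<psi> w) \<le> 1 / r ^ n" using r0 by (simp add: field_simps)
    qed
  qed
  have lim: "((\<lambda>r::real. 1 / r ^ n) \<longlongrightarrow> 1) (at_left 1)"
    by (rule tendsto_eq_intros) (auto intro!: tendsto_eq_intros)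
  have ev: "eventually (\<lambda>r. norm (\<psi> z) \<le> 1 / r ^ n) (at_left (1::real))"
    unfolding eventually_at_left_field
    using z step by (intro exI[of _ "norm z"]) auto
  show ?thesis by (rule tendsto_lowerbound[OF lim ev]) simp
qed

lemma norm_diff_le_sum:
  fixes u :: complex and t :: real
  assumes "0 \<le> Re u" "0 \<le> t"
  shows "norm (u - complex_of_real t) \<le> norm (u + complex_of_real t)"
proof (rule power2_le_imp_le)
  have "(norm (u - complex_of_real t))^2 = (Re u - t)^2 + (Im u)^2" by (simp add: cmod_power2)
  also have "\<dots> \<le> (Re u + t)^2 + (Im u)^2"
    using assms by (simp add: power2_eq_square algebra_simps)
  also have "\<dots> = (norm (u + complex_of_real t))^2" by (simp add: cmod_power2)
  finally show "(norm (u - complex_of_real t))^2 \<le> (norm (u + complex_of_real t))^2" .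
qed simp

theorem theorem9:
  fixes n :: nat and f :: "complex \<Rightarrow> complex"
  assumes "n \<ge> 1"
    and "krzyz_extremal n f"
    and "taylor_coeff f n = 2 * taylor_coeff f 0"
    and "taylor_coeff f 0 \<in> \<real>" and "Re (taylor_coeff f 0) > 0"
  shows "\<forall>z\<in>unit_disc. f z = exp (- (1 - z ^ n) / (1 + z ^ n))"
proof -
  note n = assms(1)
  have fB: "f \<in> krzyz_class" and ext: "\<forall>g\<in>krzyz_class. norm (taylor_coeff g n) \<le> norm (taylor_coeff f n)"
    using assms(2) by (auto simp: krzyz_extremal_def)
  have fhol: "f holomorphic_on ball 0 1" and fnz: "\<And>z. z \<in> ball 0 1 \<Longrightarrow> f z \<noteq> 0"
    and fle: "\<And>z. z \<in> ball 0 1 \<Longrightarrow> norm (f z) \<le> 1"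
    using fB by (auto simp: krzyz_class_def)
  define a where "a = taylor_coeff f"
  define r where "r = Re (a 0)"
  have rpos: "r > 0" using assms(5) by (simp add: r_def a_def)
  have a0: "a 0 = complex_of_real r"
    using assms(4) by (simp add: r_def a_def complex_is_Real_iff complex_eq_iff)
  have an: "taylor_coeff f n = complex_of_real (2 * r)"
    using assms(3) a0 by (simp add: a_def)
  have f0: "f 0 = complex_of_real r"
    using a0 by (simp add: a_def taylor_coeff_def)
  \<comment> \<open>Step 1-2: the variational inequality kills the low coefficients\<close>
  have hyp: "0 \<le> Re (a 0 + (\<Sum>i<n. a i * Ecis (real (n - i) * \<theta>)))" for \<theta>
  proof -
    have "0 \<le> (2 * r) / 2 + Re (\<Sum>i<n. taylor_coeff f i * Ecis \<theta> ^ (n - i))"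
      by (rule variation[OF fB ext an]) (use rpos in auto)
    then show ?thesis by (simp add: Ex_pow a_def r_def)
  qed
  have az: "a i = 0" if "0 < i" "i < n" for i
    using fourier_kill[OF n a0 rpos hyp, of i] that by simp
  obtain g where ghol: "g holomorphic_on ball 0 1" and fg: "\<And>z. z \<in> ball 0 1 \<Longrightarrow> f z = exp (g z)"
    using contractible_imp_holomorphic_log[OF fhol convex_imp_contractible[OF convex_ball] fnz] by blast
  define t where "t = - ln r"
  have rt: "r = exp (- t)" using rpos by (simp add: t_def)
  define p where "p = (\<lambda>z. g 0 - g z + complex_of_real t)"
  have phol: "p holomorphic_on ball 0 1" unfolding p_def using ghol by (intro holomorphic_intros) auto
  have g0: "exp (g 0) = complex_of_real r" using fg[of 0] f0 by simp
  have pf: "f z = exp (- p z)" if "z \<in> ball 0 1" for z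
  proof -
    have "exp (- p z) = exp (g z) * inverse (exp (g 0)) * exp (- complex_of_real t)"
      by (simp add: p_def exp_add[symmetric] exp_diff exp_minus field_simps)
    also have "exp (- complex_of_real t) = complex_of_real r"
      by (simp add: rt flip: exp_of_real)
    finally show ?thesis using fg[OF that] g0 rpos by simp
  qed
  have p0: "p 0 = complex_of_real t" by (simp add: p_def)
  have Reg0: "Re (g 0) = - t"
  proof -
    have "exp (Re (g 0)) = norm (exp (g 0))" by simp
    also have "\<dots> = r" using g0 rpos by simp
    finally have "ln (exp (Re (g 0))) = ln r" by simp
    then show ?thesis by (simp add: t_def)
  qed
  have Rep: "0 \<le> Re (p z)" if "z \<in> ball 0 1" for z
  proof -
    have "exp (Re (g z)) = norm (f z)" using fg[OF that] by simp
    also have "\<dots> \<le> 1" using fle[OF that] .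
    finally have "Re (g z) \<le> 0" by simp
    then show ?thesis using Reg0 by (simp add: p_def)
  qed
  define P where "P = fps_expansion p 0"
  define A where "A = fps_expansion f 0"
  have A_eq: "A = fps_expansion (\<lambda>z. exp ((-1) * p z)) 0"
    unfolding A_def
    by (rule fps_expansion_cong)
       (use eventually_nhds_in_open[of "ball 0 1" 0] pf in \<open>auto elim: eventually_mono\<close>)
  have odeA: "fps_deriv A = fps_deriv (fps_const (-1) * P) * A"
    unfolding A_eq P_def by (rule exp_ode[OF phol])
  have Ak: "A $ k = a k" for k by (simp add: A_def a_def tc_fps)
  have A0: "A $ 0 \<noteq> 0" using a0 rpos by (simp add: Ak)
  have Rz: "(fps_const (-1) * P) $ j = 0" if "0 < j" "j < n" for j
    by (rule fps_rec_inv[OF odeA A0, of n]) (use that az in \<open>auto simp: Ak\<close>)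
  have Pz: "P $ j = 0" if "0 < j" "j < n" for j
    using Rz[OF that] by simp
  have "A $ n = (fps_const (-1) * P) $ n * A $ 0"
    by (rule fps_rec[OF odeA n]) (use Rz in auto)
  then have "complex_of_real (2 * r) = - P $ n * complex_of_real r"
    using an a0 by (simp add: Ak a_def)
  then have "complex_of_real r * (P $ n + 2) = 0" by (simp add: algebra_simps)
  then have "P $ n + 2 = 0" using rpos by simp
  then have Pn: "P $ n = -2" by (simp add: eq_neg_iff_add_eq_0)
  have P0: "P $ 0 = complex_of_real t" by (simp add: P_def fps_expansion_def p0)
  \<comment> \<open>Step 5: t = 1 via the family exp (- s p)\<close>
  have key: "s * exp (- s * t) \<le> exp (- t)" if s: "s > 0" for s
  proof -
    define c where "c = - complex_of_real s"
    define q where "q = (\<lambda>z. exp (c * p z))"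
    define Q where "Q = fps_expansion q 0"
    have odeQ: "fps_deriv Q = fps_deriv (fps_const c * P) * Q"
      unfolding Q_def q_def P_def by (rule exp_ode[OF phol])
    have "Q $ n = (fps_const c * P) $ n * Q $ 0"
      by (rule fps_rec[OF odeQ n]) (use Pz in auto)
    moreover have "Q $ 0 = exp (c * complex_of_real t)"
      by (simp add: Q_def fps_expansion_def q_def p0)
    ultimately have Qn: "Q $ n = complex_of_real (2 * s * exp (- s * t))"
      using Pn by (simp add: c_def exp_of_real[symmetric])
    have qB: "q \<in> krzyz_class"
      unfolding krzyz_class_def
    proof (intro CollectI conjI ballI)
      show "q holomorphic_on ball 0 1" unfolding q_def using phol by (intro holomorphic_intros)
    next
      fix z :: complex assume z: "z \<in> ball 0 1"
      show "0 < norm (q z)" by (simp add: q_def)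
      have "norm (q z) = exp (- s * Re (p z))" by (simp add: q_def c_def)
      also have "\<dots> \<le> 1" using Rep[OF z] s by simp
      finally show "norm (q z) \<le> 1" .
    qed
    have "norm (taylor_coeff q n) \<le> norm (taylor_coeff f n)" using ext qB by blast
    moreover have "taylor_coeff q n = Q $ n" by (simp only: tc_fps Q_def)
    moreover have "norm (complex_of_real (2 * s * exp (- s * t))) = 2 * s * exp (- s * t)"
      using s by (simp only: norm_of_real) simp
    moreover have "norm (taylor_coeff f n) = 2 * r"
      using an rpos by simp
    ultimately have "2 * s * exp (- s * t) \<le> 2 * r"
      using Qn by simp
    then show ?thesis using rt by simp
  qed
  have tpos: "t > 0"
  proof (rule ccontr)
    assume "\<not> t > 0"
    then have e1: "exp (- t) \<le> exp (- (2 * t))" by simp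
    have e2: "2 * exp (- (2 * t)) \<le> exp (- t)" using key[of 2] by simp
    have "0 < exp (- (2 * t))" by simp
    then show False using e1 e2 by linarith
  qed
  have t1: "t = 1"
  proof (rule ccontr)
    assume "t \<noteq> 1"
    then have "1 + (t - 1) < exp (t - 1)" by (intro exp_gt_strict) simp
    moreover have "(1 / t) * exp (- (1 / t) * t) \<le> exp (- t)" using key[of "1/t"] tpos by simp
    then have "exp (- 1) \<le> t * exp (- t)" using tpos by (simp add: field_simps)
    then have "exp (- 1) * exp t \<le> t * exp (- t) * exp t" by simp
    then have "exp (t - 1) \<le> t" by (simp add: exp_minus field_simps) (simp add: exp_diff pos_divide_le_eq mult.commute)
    ultimately show False by simp
  qed
  define Pt where "Pt = P - fps_const (complex_of_real t)"
  have pexp: "p has_fps_expansion P" unfolding P_def by (rule disc_expansion[OF phol])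
  have ptexp: "(\<lambda>z. p z - complex_of_real t) has_fps_expansion Pt"
    unfolding Pt_def by (rule has_fps_expansion_diff[OF pexp has_fps_expansion_const])
  have Ptk: "Pt $ k = 0" if "k < n" for k
    using that Pz P0 by (cases "k = 0") (auto simp: Pt_def)
  have Ptn: "Pt $ n = -2" using n Pn by (simp add: Pt_def)
  have Pt_nz: "Pt \<noteq> 0" using Ptn by auto
  have sd: "n \<le> subdegree Pt" by (rule subdegree_geI[OF Pt_nz Ptk])
  define w where "w = (\<lambda>z. if z = 0 then -2 else (p z - complex_of_real t) / z ^ n)"
  have wexp: "w has_fps_expansion fps_shift n Pt"
    unfolding w_def by (rule has_fps_expansion_shift[OF ptexp sd]) (simp add: Ptn)
  have wan0: "w analytic_on {0}" by (rule has_fps_expansion_imp_analytic_0[OF wexp])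
  have "w holomorphic_on (ball 0 1 - {0})"
  proof (rule holomorphic_transform[of "\<lambda>z. (p z - complex_of_real t) / z ^ n"])
    show "(\<lambda>z. (p z - complex_of_real t) / z ^ n) holomorphic_on ball 0 1 - {0}"
      using phol by (intro holomorphic_intros) (auto intro: holomorphic_on_subset)
  qed (simp add: w_def)
  moreover have oo: "open (ball (0::complex) 1 - {0})" by (intro open_Diff) auto
  ultimately have "w analytic_on (ball 0 1 - {0})" using analytic_on_open[OF oo] by simp
  with wan0 have "w analytic_on ((ball 0 1 - {0}) \<union> {0})" unfolding analytic_on_Un by blast
  then have whol: "w holomorphic_on ball 0 1"
    by (rule analytic_imp_holomorphic[THEN holomorphic_on_subset]) auto
  have pw: "p z - complex_of_real t = z ^ n * w z" if "z \<in> ball 0 1" for z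
    using n p0 by (cases "z = 0") (auto simp: w_def)
  have den: "p z + complex_of_real t \<noteq> 0" if "z \<in> ball 0 1" for z
  proof
    assume "p z + complex_of_real t = 0"
    then have "Re (p z) + t = 0" by (metis Re_complex_of_real plus_complex.sel(1) zero_complex.sel(1))
    then show False using Rep[OF that] tpos by simp
  qed
  define \<psi> where "\<psi> = (\<lambda>z. w z / (p z + complex_of_real t))"
  have psihol: "\<psi> holomorphic_on ball 0 1"
    unfolding \<psi>_def using whol phol den by (intro holomorphic_intros) auto
  have bnd: "norm (z ^ n * \<psi> z) \<le> 1" if "z \<in> ball 0 1" for z
  proof -
    have "z ^ n * \<psi> z = (p z - complex_of_real t) / (p z + complex_of_real t)"
      using pw[OF that] by (simp add: \<psi>_def)
    also have "norm \<dots> \<le> 1"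
      using norm_diff_le_sum[OF Rep[OF that], of t] tpos den[OF that]
      by (simp add: norm_divide divide_le_eq_1)
    finally show ?thesis .
  qed
  have psi1: "norm (\<psi> z) \<le> 1" if "z \<in> ball 0 1" for z
    by (rule schwarz_n[OF psihol bnd that])
  have psi0: "\<psi> 0 = -1" using p0 t1 by (simp add: \<psi>_def w_def)
  have "\<psi> constant_on ball 0 1"
    by (rule maximum_modulus_principle[OF psihol open_ball connected_ball open_ball subset_refl, of 0])
       (use psi1 psi0 in auto)
  then have psic: "\<psi> z = -1" if "z \<in> ball 0 1" for z
    using that psi0 unfolding constant_on_def by (metis centre_in_ball zero_less_one)
  show ?thesis
  proof
    fix z :: complex assume z: "z \<in> ball 0 1"
    have zn: "norm (z ^ n) < 1"
      using z n by (simp add: norm_power power_less_one_iff)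
    have zn1: "1 + z ^ n \<noteq> 0"
    proof
      assume "1 + z ^ n = 0"
      then have "z ^ n = -1" by (simp add: add_eq_0_iff)
      then show False using zn by simp
    qed
    have "w z = \<psi> z * (p z + complex_of_real t)" using den[OF z] by (simp add: \<psi>_def)
    then have wz: "w z = - (p z + 1)" using psic[OF z] t1 by simp
    have "p z - 1 = z ^ n * w z" using pw[OF z] t1 by simp
    also have "\<dots> = - (z ^ n) * (p z + 1)" unfolding wz by (simp only: mult_minus_left mult_minus_right)
    finally have "p z - 1 = - (z ^ n) * (p z + 1)" .
    then have "p z * (1 + z ^ n) = 1 - z ^ n" by (simp add: algebra_simps)
    then have "p z = (1 - z ^ n) / (1 + z ^ n)" using zn1 by (simp add: field_simps)
    then have "f z = exp (- ((1 - z ^ n) / (1 + z ^ n)))" using pf[OF z] by simp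
    then show "f z = exp (- (1 - z ^ n) / (1 + z ^ n))" by (simp only: minus_divide_left)
  qed
qed

end
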